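(* Let $G=([n],E)$ be any graph, $F$ the uniform distribution on $[0,1]$, and $p\in(0,1)$. Let $X\subseteq[0,1]^n$ be the set of vectors $\mathbf{x}$ such that for every $i$: $\sum_{j\in N(i)\cup\{i\}}x_j\ge1$, and $\sum_{j\in N(i)\cup\{i\}}x_j>1$ implies $x_i=0$. Then $$p(1-p)\min_{\mathbf{x}\in X}\sum_i x_i\ \le\ \inf_{\mathbf{T}\in\mathcal{N}_{p\cdot\mathbf{1}}}\mathcal{R}(p\cdot\mathbf{1},\mathbf{T})\ \le\ p\log(1/p)\min_{\mathbf{x}\in X}\sum_ix_i.$$
   Context: Public-goods pricing game: $n$ buyers are the vertices of an undirected graph $G=([n],E)$; $N(i)=\{j:(i,j)\in E\}$ (so $i\notin N(i)$). Values i.i.d. uniform on $[0,1]$, $F(x)=\min\{1,x\}$ for $x\ge0$, $F(\infty)=1$. An equilibrium for price vector $\mathbf{p}$ is $\mathbf{T}\in[0,\infty]^n$ (buyer $i$ purchases iff $v_i\ge T_i$) with $T_i=p_i/\prod_{j\in N(i)}F(T_j)$ for all $i$ (convention $c/0=\infty$); $\mathcal{N}_{\mathbf{p}}$ is the set of equilibria; $\mathcal{R}(\mathbf{p},\mathbf{T})=\sum_ip_i(1-F(T_i))$; $p\cdot\mathbf{1}$ is the uniform price vector; $\log$ is the natural logarithm. *)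

theory Defs
  imports "HOL-Analysis.Analysis"
begin

text \<open>Graph on vertex set [n] = {0..<n}, given by a symmetric irreflexive
  adjacency relation E.\<close>
definition graph_on :: "nat \<Rightarrow> (nat \<Rightarrow> nat \<Rightarrow> bool) \<Rightarrow> bool" where
  "graph_on n E \<longleftrightarrow> (\<forall>i j. E i j \<longrightarrow> E j i) \<and> (\<forall>i. \<not> E i i)"

definition nbrs :: "nat \<Rightarrow> (nat \<Rightarrow> nat \<Rightarrow> bool) \<Rightarrow> nat \<Rightarrow> nat set" where
  "nbrs n E i = {j. j < n \<and> E i j}"

text \<open>Uniform CDF on [0,1], extended to [0,\<infinity>] with F(\<infinity>) = 1.\<close>
definition Funif :: "ennreal \<Rightarrow> real" where
  "Funif t = (if t = top then 1 else min 1 (enn2real t))"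

text \<open>Equilibria for price vector pv: thresholds T in [0,\<infinity>]^n with
  T_i = p_i / prod_{j in N(i)} F(T_j), convention c/0 = \<infinity>.\<close>
definition equilibria :: "nat \<Rightarrow> (nat \<Rightarrow> nat \<Rightarrow> bool) \<Rightarrow> (nat \<Rightarrow> real) \<Rightarrow> (nat \<Rightarrow> ennreal) set" where
  "equilibria n E pv = {T. \<forall>i<n.
      T i = (let q = (\<Prod>j\<in>nbrs n E i. Funif (T j)) in
             if q = 0 then top else ennreal (pv i / q))}"

definition revenue :: "nat \<Rightarrow> (nat \<Rightarrow> real) \<Rightarrow> (nat \<Rightarrow> ennreal) \<Rightarrow> real" where
  "revenue n pv T = (\<Sum>i<n. pv i * (1 - Funif (T i)))"

definition Xset :: "nat \<Rightarrow> (nat \<Rightarrow> nat \<Rightarrow> bool) \<Rightarrow> (nat \<Rightarrow> real) set" where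
  "Xset n E = {x. (\<forall>i<n. 0 \<le> x i \<and> x i \<le> 1) \<and>
      (\<forall>i<n. (\<Sum>j\<in>insert i (nbrs n E i). x j) \<ge> 1 \<and>
             ((\<Sum>j\<in>insert i (nbrs n E i). x j) > 1 \<longrightarrow> x i = 0))}"

end

theory Submission
  imports Defs
begin

lemma funif_range: "0 \<le> Funif t \<and> Funif t \<le> 1"
  by (auto simp: Funif_def)

lemma funif_ennreal: "0 \<le> r \<Longrightarrow> Funif (ennreal r) = min 1 r"
  by (simp add: Funif_def)

lemma powr_bounds:
  fixes p x :: real
  assumes "0 < p" "p < 1" "0 \<le> x" "x \<le> 1"
  shows "(1 - p) * x \<le> 1 - p powr x" "1 - p powr x \<le> x * ln (1 / p)"
proof -
  have "exp ((1 - x) *\<^sub>R 0 + x *\<^sub>R ln p) \<le> (1 - x) * exp 0 + x * exp (ln p)"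
    using assms by (intro convex_onD[OF exp_convex]) auto
  then have "p powr x \<le> (1 - x) + x * p"
    using assms by (simp add: powr_def mult.commute)
  then show "(1 - p) * x \<le> 1 - p powr x" by (simp add: algebra_simps)
  have h: "1 + x * ln p \<le> exp (x * ln p)" by (rule exp_ge_add_one_self)
  have e: "p powr x = exp (x * ln p)" using assms by (simp add: powr_def mult.commute)
  have l: "x * ln (1 / p) = - (x * ln p)" using assms by (simp add: ln_div)
  show "1 - p powr x \<le> x * ln (1 / p)"
    unfolding e l using h by linarith
qed

lemma nbrs_finite: "finite (nbrs n E i)"
  by (rule finite_subset[of _ "{..<n}"]) (auto simp: nbrs_def)

lemma nbrs_notin: "graph_on n E \<Longrightarrow> i \<notin> nbrs n E i"
  by (auto simp: nbrs_def graph_on_def)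

lemma sum_insert_nbrs:
  "graph_on n E \<Longrightarrow> (\<Sum>j\<in>insert i (nbrs n E i). x j) = x i + (\<Sum>j\<in>nbrs n E i. x j)"
  using nbrs_finite nbrs_notin by (simp add: sum.insert)

lemma eq_to_x:
  assumes G: "graph_on n E" and p: "0 < p" "p < 1"
    and T: "T \<in> equilibria n E (\<lambda>_. p)"
  defines "x \<equiv> \<lambda>i. ln (Funif (T i)) / ln p"
  shows "x \<in> Xset n E" "revenue n (\<lambda>_. p) T = (\<Sum>i<n. p * (1 - p powr x i))"
proof -
  define q where "q i = (\<Prod>j\<in>nbrs n E i. Funif (T j))" for i
  have Ti: "T i = (if q i = 0 then top else ennreal (p / q i))" if "i < n" for i
    using T that by (simp add: equilibria_def q_def Let_def)
  have q01: "0 \<le> q i \<and> q i \<le> 1" for i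
    unfolding q_def using funif_range by (simp add: prod_nonneg prod_le_1)
  have yp: "p \<le> Funif (T i)" if "i < n" for i
  proof (cases "q i = 0")
    case True then show ?thesis using Ti[OF that] p by (simp add: Funif_def)
  next
    case False
    then have "q i > 0" using q01[of i] by simp
    then have "p \<le> p / q i" using q01[of i] p by (simp add: le_divide_eq)
    moreover have "0 \<le> p / q i" using \<open>q i > 0\<close> p by simp
    ultimately show ?thesis using Ti[OF that] False p by (simp add: funif_ennreal)
  qed
  have qpos: "q i > 0" for i
    unfolding q_def by (rule prod_pos) (use yp p in \<open>force simp: nbrs_def\<close>)
  have yform: "Funif (T i) = min 1 (p / q i)" if "i < n" for i
    using Ti[OF that] qpos[of i] p by (simp add: funif_ennreal)
  have lnp: "ln p < 0" using p by simp
  have x01: "0 \<le> x i \<and> x i \<le> 1" if "i < n" for i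
  proof -
    have "ln (Funif (T i)) \<le> 0" "ln p \<le> ln (Funif (T i))"
      using yp[OF that] funif_range[of "T i"] p by auto
    then show ?thesis using lnp unfolding x_def
      by (auto simp: divide_nonpos_neg divide_le_eq_1_neg)
  qed
  have sN: "(\<Sum>j\<in>nbrs n E i. x j) = ln (q i) / ln p" for i
  proof -
    have "ln (q i) = (\<Sum>j\<in>nbrs n E i. ln (Funif (T j)))"
      unfolding q_def using yp p by (intro ln_prod nbrs_finite) (force simp: nbrs_def)
    then show ?thesis by (simp add: x_def sum_divide_distrib)
  qed
  have key: "x i = max 0 (1 - (\<Sum>j\<in>nbrs n E i. x j))" if "i < n" for i
  proof (cases "1 \<le> p / q i")
    case True
    then have "0 \<le> ln (p / q i)" by simp
    then have "ln p - ln (q i) \<ge> 0" using qpos[of i] p by (simp add: ln_div)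
    then have "ln (q i) / ln p \<ge> 1" using lnp by (simp add: le_divide_eq)
    moreover have "x i = 0" using True yform[OF that] by (simp add: x_def)
    ultimately show ?thesis by (simp add: sN)
  next
    case False
    then have "x i = (ln p - ln (q i)) / ln p"
      using yform[OF that] qpos[of i] p by (simp add: x_def ln_div)
    also have "\<dots> = 1 - ln (q i) / ln p" using lnp by (simp add: diff_divide_distrib)
    finally have "x i = 1 - ln (q i) / ln p" .
    then show ?thesis using x01[OF that] by (simp add: sN)
  qed
  show "x \<in> Xset n E"
    unfolding Xset_def
  proof (intro CollectI conjI allI impI)
    fix i assume i: "i < n"
    show "0 \<le> x i" "x i \<le> 1" using x01[OF i] by auto
    have k: "x i = max 0 (1 - (\<Sum>j\<in>nbrs n E i. x j))" by (rule key[OF i])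
    have si: "(\<Sum>j\<in>insert i (nbrs n E i). x j) = x i + (\<Sum>j\<in>nbrs n E i. x j)"
      by (rule sum_insert_nbrs[OF G])
    have a: "x i \<ge> 1 - (\<Sum>j\<in>nbrs n E i. x j)" using k by linarith
    have b: "x i = 0 \<or> x i = 1 - (\<Sum>j\<in>nbrs n E i. x j)" using k by linarith
    show "1 \<le> (\<Sum>j\<in>insert i (nbrs n E i). x j)" using a si by linarith
    show "x i = 0" if "1 < (\<Sum>j\<in>insert i (nbrs n E i). x j)" using b si that by linarith
  qed
  have "p powr x i = Funif (T i)" if "i < n" for i
    using yp[OF that] p lnp by (simp add: x_def powr_def)
  then show "revenue n (\<lambda>_. p) T = (\<Sum>i<n. p * (1 - p powr x i))"
    unfolding revenue_def by (intro sum.cong) auto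
qed

lemma x_to_eq:
  assumes G: "graph_on n E" and p: "0 < p" "p < 1" and x: "x \<in> Xset n E"
  defines "T \<equiv> \<lambda>i. ennreal (p powr (1 - (\<Sum>j\<in>nbrs n E i. x j)))"
  shows "T \<in> equilibria n E (\<lambda>_. p)" "revenue n (\<lambda>_. p) T = (\<Sum>i<n. p * (1 - p powr x i))"
proof -
  have x01: "0 \<le> x i \<and> x i \<le> 1" if "i < n" for i using x that by (simp add: Xset_def)
  have xs: "x i + (\<Sum>j\<in>nbrs n E i. x j) \<ge> 1 \<and> (x i + (\<Sum>j\<in>nbrs n E i. x j) > 1 \<longrightarrow> x i = 0)"
    if "i < n" for i
  proof -
    have "(\<Sum>j\<in>insert i (nbrs n E i). x j) \<ge> 1 \<and> ((\<Sum>j\<in>insert i (nbrs n E i). x j) > 1 \<longrightarrow> x i = 0)"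
      using x that by (simp add: Xset_def)
    then show ?thesis by (simp add: sum_insert_nbrs[OF G])
  qed
  have FT: "Funif (T i) = p powr x i" if "i < n" for i
  proof (cases "x i = 0")
    case True
    then have "1 - (\<Sum>j\<in>nbrs n E i. x j) \<le> 0" using xs[OF that] by simp
    then have "0 \<le> (1 - (\<Sum>j\<in>nbrs n E i. x j)) * ln p" using p
      by (intro mult_nonpos_nonpos) auto
    then have "p powr (1 - (\<Sum>j\<in>nbrs n E i. x j)) \<ge> 1" using p
      by (simp add: powr_def)
    then show ?thesis using True p by (simp add: T_def funif_ennreal)
  next
    case False
    then have "1 - (\<Sum>j\<in>nbrs n E i. x j) = x i" using xs[OF that] x01[OF that] by fastforce
    moreover have "x i * ln p \<le> 0" using x01[OF that] p by (intro mult_nonneg_nonpos) auto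
    then have "p powr x i \<le> 1" using p by (simp add: powr_def)
    ultimately show ?thesis using p by (simp add: T_def funif_ennreal)
  qed
  have qf: "(\<Prod>j\<in>nbrs n E i. Funif (T j)) = p powr (\<Sum>j\<in>nbrs n E i. x j)" for i
    using p by (simp add: powr_sum nbrs_def FT)
  show "T \<in> equilibria n E (\<lambda>_. p)"
    unfolding equilibria_def
  proof (intro CollectI allI impI)
    fix i assume "i < n"
    have "p powr (\<Sum>j\<in>nbrs n E i. x j) \<noteq> 0" using p by simp
    moreover have "T i = ennreal (p / p powr (\<Sum>j\<in>nbrs n E i. x j))"
      using p by (simp add: T_def powr_diff)
    ultimately show "T i = (let q = (\<Prod>j\<in>nbrs n E i. Funif (T j)) in
             if q = 0 then top else ennreal (p / q))"
      by (simp only: Let_def qf) simp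
  qed
  show "revenue n (\<lambda>_. p) T = (\<Sum>i<n. p * (1 - p powr x i))"
    unfolding revenue_def by (intro sum.cong) (auto simp: FT)
qed

lemma mis_exists:
  assumes G: "graph_on n E"
  shows "\<exists>S. S \<subseteq> {..<m} \<and> (\<forall>i\<in>S. \<forall>j\<in>S. \<not> E i j) \<and> (\<forall>i<m. i \<notin> S \<longrightarrow> (\<exists>j\<in>S. E i j))"
proof (induction m)
  case 0 then show ?case by auto
next
  case (Suc m)
  then obtain S where S: "S \<subseteq> {..<m}" "\<forall>i\<in>S. \<forall>j\<in>S. \<not> E i j" "\<forall>i<m. i \<notin> S \<longrightarrow> (\<exists>j\<in>S. E i j)"
    by blast
  show ?case
  proof (cases "\<exists>j\<in>S. E m j")
    case True
    then show ?thesis using S by (intro exI[of _ S]) (auto simp: less_Suc_eq)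
  next
    case False
    have sym: "E a b \<Longrightarrow> E b a" for a b using G by (auto simp: graph_on_def)
    have irr: "\<not> E a a" for a using G by (auto simp: graph_on_def)
    show ?thesis using S False irr
      by (intro exI[of _ "insert m S"]) (auto simp: less_Suc_eq dest: sym)
  qed
qed

lemma X_nonempty:
  assumes G: "graph_on n E"
  shows "Xset n E \<noteq> {}"
proof -
  obtain S where S: "S \<subseteq> {..<n}" "\<forall>i\<in>S. \<forall>j\<in>S. \<not> E i j" "\<forall>i<n. i \<notin> S \<longrightarrow> (\<exists>j\<in>S. E i j)"
    using mis_exists[OF G, of n] by auto
  define x :: "nat \<Rightarrow> real" where "x i = (if i \<in> S then 1 else 0)" for i
  have "x \<in> Xset n E"
    unfolding Xset_def
  proof (intro CollectI conjI allI impI)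
    fix i assume i: "i < n"
    show "0 \<le> x i" "x i \<le> 1" by (auto simp: x_def)
    have nn: "0 \<le> x j" for j by (simp add: x_def)
    show "1 \<le> (\<Sum>j\<in>insert i (nbrs n E i). x j)"
    proof (cases "i \<in> S")
      case True
      then have "x i \<le> (\<Sum>j\<in>insert i (nbrs n E i). x j)"
        using nn by (intro member_le_sum) (auto simp: nbrs_finite)
      then show ?thesis using True by (simp add: x_def)
    next
      case False
      then obtain j where j: "j \<in> S" "E i j" using S i by blast
      then have "j \<in> insert i (nbrs n E i)" using S(1) by (auto simp: nbrs_def)
      then have "x j \<le> (\<Sum>j\<in>insert i (nbrs n E i). x j)"
        using nn by (intro member_le_sum) (auto simp: nbrs_finite)
      then show ?thesis using j by (simp add: x_def)
    qed
    show "x i = 0" if "1 < (\<Sum>j\<in>insert i (nbrs n E i). x j)"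
    proof (rule ccontr)
      assume "x i \<noteq> 0"
      then have iS: "i \<in> S" by (simp add: x_def split: if_splits)
      have "(\<Sum>j\<in>nbrs n E i. x j) = 0"
        using S(2) iS by (intro sum.neutral) (auto simp: x_def nbrs_def)
      moreover have "(\<Sum>j\<in>insert i (nbrs n E i). x j) = x i + (\<Sum>j\<in>nbrs n E i. x j)"
        by (rule sum_insert_nbrs[OF G])
      moreover have "x i = 1" using iS by (simp add: x_def)
      ultimately show False using that by linarith
    qed
  qed
  then show ?thesis by blast
qed

theorem mainTheorem13:
  fixes n :: nat and E :: "nat \<Rightarrow> nat \<Rightarrow> bool" and p :: real
  assumes "graph_on n E" and "0 < p" and "p < 1"
  shows "p * (1 - p) * (INF x\<in>Xset n E. \<Sum>i<n. x i)
           \<le> (INF T\<in>equilibria n E (\<lambda>_. p). revenue n (\<lambda>_. p) T)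
       \<and> (INF T\<in>equilibria n E (\<lambda>_. p). revenue n (\<lambda>_. p) T)
           \<le> p * ln (1 / p) * (INF x\<in>Xset n E. \<Sum>i<n. x i)"
proof -
  note G = assms(1) and p = assms(2,3)
  have Xne: "Xset n E \<noteq> {}" by (rule X_nonempty[OF G])
  then obtain x0 where x0: "x0 \<in> Xset n E" by blast
  have Ene: "equilibria n E (\<lambda>_. p) \<noteq> {}" using x_to_eq(1)[OF G p x0] by blast
  have revnn: "0 \<le> revenue n (\<lambda>_. p) T" for T
    unfolding revenue_def using funif_range p by (intro sum_nonneg) auto
  have sxnn: "0 \<le> (\<Sum>i<n. x i)" if "x \<in> Xset n E" for x
    using that by (intro sum_nonneg) (auto simp: Xset_def)
  have bX: "bdd_below ((\<lambda>x. \<Sum>i<n. x i) ` Xset n E)"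
    using sxnn by (intro bdd_belowI2) auto
  have bE: "bdd_below (revenue n (\<lambda>_. p) ` equilibria n E (\<lambda>_. p))"
    using revnn by (intro bdd_belowI2) auto
  have lp: "ln (1/p) > 0" using p by (simp add: ln_div)
  have cpos: "0 < p * ln (1/p)" using p lp by simp
  have A: "p * (1 - p) * (INF x\<in>Xset n E. \<Sum>i<n. x i)
           \<le> (INF T\<in>equilibria n E (\<lambda>_. p). revenue n (\<lambda>_. p) T)"
  proof (rule cINF_greatest[OF Ene])
    fix T assume T: "T \<in> equilibria n E (\<lambda>_. p)"
    define x where "x = (\<lambda>i. ln (Funif (T i)) / ln p)"
    have xX: "x \<in> Xset n E" and rv: "revenue n (\<lambda>_. p) T = (\<Sum>i<n. p * (1 - p powr x i))"
      using eq_to_x[OF G p T] unfolding x_def by auto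
    have "p * (1 - p) * (INF x\<in>Xset n E. \<Sum>i<n. x i) \<le> p * (1 - p) * (\<Sum>i<n. x i)"
      using p by (intro mult_left_mono cINF_lower[OF bX xX]) auto
    also have "\<dots> = (\<Sum>i<n. p * ((1 - p) * x i))" by (simp add: sum_distrib_left mult.assoc)
    also have "\<dots> \<le> (\<Sum>i<n. p * (1 - p powr x i))"
      using xX p powr_bounds(1)[OF p] by (intro sum_mono mult_left_mono) (auto simp: Xset_def)
    finally show "p * (1 - p) * (INF x\<in>Xset n E. \<Sum>i<n. x i) \<le> revenue n (\<lambda>_. p) T"
      using rv by simp
  qed
  have "(INF T\<in>equilibria n E (\<lambda>_. p). revenue n (\<lambda>_. p) T) / (p * ln (1/p))
          \<le> (INF x\<in>Xset n E. \<Sum>i<n. x i)"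
  proof (rule cINF_greatest[OF Xne])
    fix x assume xX: "x \<in> Xset n E"
    define T where "T = (\<lambda>i. ennreal (p powr (1 - (\<Sum>j\<in>nbrs n E i. x j))))"
    have TE: "T \<in> equilibria n E (\<lambda>_. p)" and rv: "revenue n (\<lambda>_. p) T = (\<Sum>i<n. p * (1 - p powr x i))"
      using x_to_eq[OF G p xX] unfolding T_def by auto
    have "(INF T\<in>equilibria n E (\<lambda>_. p). revenue n (\<lambda>_. p) T) \<le> revenue n (\<lambda>_. p) T"
      by (rule cINF_lower[OF bE TE])
    also have "\<dots> \<le> (\<Sum>i<n. p * (x i * ln (1/p)))"
      unfolding rv
      using xX p powr_bounds(2)[OF p] by (intro sum_mono mult_left_mono) (auto simp: Xset_def)
    also have "\<dots> = (p * ln (1/p)) * (\<Sum>i<n. x i)"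
      by (simp add: sum_distrib_left sum_distrib_right mult_ac)
    finally have "(INF T\<in>equilibria n E (\<lambda>_. p). revenue n (\<lambda>_. p) T) \<le> (p * ln (1/p)) * (\<Sum>i<n. x i)" .
    then have "(INF T\<in>equilibria n E (\<lambda>_. p). revenue n (\<lambda>_. p) T) / (p * ln (1/p)) \<le> ((p * ln (1/p)) * (\<Sum>i<n. x i)) / (p * ln (1/p))"
      using cpos by (intro divide_right_mono) auto
    also have "\<dots> = (\<Sum>i<n. x i)" using cpos by (intro nonzero_mult_div_cancel_left) auto
    finally show "(INF T\<in>equilibria n E (\<lambda>_. p). revenue n (\<lambda>_. p) T) / (p * ln (1/p)) \<le> (\<Sum>i<n. x i)" .
  qed
  then have "(p * ln (1/p)) * ((INF T\<in>equilibria n E (\<lambda>_. p). revenue n (\<lambda>_. p) T) / (p * ln (1/p)))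
      \<le> (p * ln (1/p)) * (INF x\<in>Xset n E. \<Sum>i<n. x i)"
    using cpos by (intro mult_left_mono) auto
  moreover have "(p * ln (1/p)) * ((INF T\<in>equilibria n E (\<lambda>_. p). revenue n (\<lambda>_. p) T) / (p * ln (1/p)))
      = (INF T\<in>equilibria n E (\<lambda>_. p). revenue n (\<lambda>_. p) T)"
    using p lp by simp
  ultimately have B: "(INF T\<in>equilibria n E (\<lambda>_. p). revenue n (\<lambda>_. p) T)
           \<le> p * ln (1 / p) * (INF x\<in>Xset n E. \<Sum>i<n. x i)"
    by simp
  show ?thesis using A B by blast
qed

end
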